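(* Let $\Gamma$ be a group, $\alpha\in\mathrm{Aut}(\Gamma)$ and $\omega:\Gamma\times\Gamma\to\Gamma$, $\omega(g,h)=\alpha(g)$. Consider the action $\rho$ of $V$ on $\prod_{\mathbb Q_2}\Gamma$ given by $$\rho(v)(a)(x)=\alpha^{-\log_2(v'(v^{-1}x))}\big(a(v^{-1}x)\big),\quad a:\mathbb Q_2\to\Gamma,\ v\in V,\ x\in\mathbb Q_2.$$ Then $G(\omega)$ is isomorphic to the (unrestricted twisted permutational wreath product) $\prod_{\mathbb Q_2}\Gamma\rtimes_\rho V$.
   Context: $\{0,1\}^*$ denotes the finite words over $\{0,1\}$ (including the empty word), $|u|$ the length; $\mathfrak C=\{0,1\}^{\mathbb N}$; $\mathbb Q_2\subset\mathfrak C$ is the set of eventually-zero sequences; $\prod_{\mathbb Q_2}\Gamma$ is the group of all maps $\mathbb Q_2\to\Gamma$ under pointwise product. A finite complete prefix code is a finite set $\{t_1,\dots,t_n\}\subset\{0,1\}^*$ such that every $x\in\mathfrak C$ has exactly one $t_i$ as prefix. Thompson's group $V$ is the group of homeomorphisms $v$ of $\mathfrak C$ for which there exist finite complete prefix codes $\{t_i\},\{s_i\}$ and a permutation $\sigma$ with $v(t_iw)=s_{\sigma(i)}w$ for all $i$, $w\in\mathfrak C$ ($V$ preserves $\mathbb Q_2$); for $y\in\mathfrak C$ with prefix $t_i$, $v'(y):=2^{|t_i|-|s_{\sigma(i)}|}$. $K(\omega)$ is the group of maps $a:\{0,1\}^*\to\Gamma$ with $a(u)=\omega(a(u0),a(u1))$;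 $V$ acts on it by $\pi(v)(a)(s_{\sigma(i)}u)=a(t_iu)$ for all $i$, $u\in\{0,1\}^*$ (determining $\pi(v)(a)\in K(\omega)$ uniquely); $G(\omega):=K(\omega)\rtimes V$ with $vav^{-1}=\pi(v)(a)$. *)

theory Defs
  imports "HOL-Algebra.Group"
begin

text \<open>Points of the Cantor space are functions nat to bool (False = 0, True = 1);
finite words are bool lists.\<close>

definition cat :: "bool list \<Rightarrow> (nat \<Rightarrow> bool) \<Rightarrow> (nat \<Rightarrow> bool)" where
  "cat u w = (\<lambda>k. if k < length u then u ! k else w (k - length u))"

definition is_prefix :: "bool list \<Rightarrow> (nat \<Rightarrow> bool) \<Rightarrow> bool" where
  "is_prefix t x \<longleftrightarrow> (\<forall>i<length t. x i = t ! i)"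

definition complete_prefix_code :: "bool list set \<Rightarrow> bool" where
  "complete_prefix_code T \<longleftrightarrow> finite T \<and> (\<forall>x. \<exists>!t. t \<in> T \<and> is_prefix t x)"

definition Q2 :: "(nat \<Rightarrow> bool) set" where
  "Q2 = {x. \<exists>n. \<forall>m\<ge>n. \<not> x m}"

definition V_rep :: "((nat \<Rightarrow> bool) \<Rightarrow> (nat \<Rightarrow> bool)) \<Rightarrow> bool list list \<Rightarrow> bool list list \<Rightarrow> (nat \<Rightarrow> nat) \<Rightarrow> bool" where
  "V_rep v ts ss \<sigma> \<longleftrightarrow> length ts = length ss \<and> distinct ts \<and> distinct ss
     \<and> complete_prefix_code (set ts) \<and> complete_prefix_code (set ss)
     \<and> bij_betw \<sigma> {..<length ts} {..<length ts}
     \<and> (\<forall>i<length ts. \<forall>w. v (cat (ts ! i) w) = cat (ss ! \<sigma> i) w)"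

definition ThompsonV :: "((nat \<Rightarrow> bool) \<Rightarrow> (nat \<Rightarrow> bool)) set" where
  "ThompsonV = {v. bij v \<and> (\<exists>ts ss \<sigma>. V_rep v ts ss \<sigma>)}"

definition V_grp :: "((nat \<Rightarrow> bool) \<Rightarrow> (nat \<Rightarrow> bool)) monoid" where
  "V_grp = \<lparr>carrier = ThompsonV, mult = (\<circ>), one = id\<rparr>"

text \<open>logder v y = log_2 (v'(y)) = |t_i| - |s_sigma(i)| for the prefix t_i of y
(independent of the chosen codes).\<close>
definition logder :: "((nat \<Rightarrow> bool) \<Rightarrow> (nat \<Rightarrow> bool)) \<Rightarrow> (nat \<Rightarrow> bool) \<Rightarrow> int" where
  "logder v y = (THE d. \<exists>t s. is_prefix t y \<and> (\<forall>w. v (cat t w) = cat s w)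
                      \<and> d = int (length t) - int (length s))"

definition semidirect :: "('a, 'm) monoid_scheme \<Rightarrow> ('c \<Rightarrow> 'a \<Rightarrow> 'a) \<Rightarrow> ('c, 'n) monoid_scheme
     \<Rightarrow> ('a \<times> 'c) monoid" where
  "semidirect N act H = \<lparr>carrier = carrier N \<times> carrier H,
     mult = (\<lambda>(a, v) (b, w). (a \<otimes>\<^bsub>N\<^esub> act v b, v \<otimes>\<^bsub>H\<^esub> w)),
     one = (\<one>\<^bsub>N\<^esub>, \<one>\<^bsub>H\<^esub>)\<rparr>"

definition K_grp :: "('g, 'z) monoid_scheme \<Rightarrow> ('g \<Rightarrow> 'g \<Rightarrow> 'g) \<Rightarrow> (bool list \<Rightarrow> 'g) monoid" where
  "K_grp \<Gamma> \<omega> = \<lparr>carrier = {a. (\<forall>u. a u \<in> carrier \<Gamma>)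
                         \<and> (\<forall>u. a u = \<omega> (a (u @ [False])) (a (u @ [True])))},
     mult = (\<lambda>a b u. a u \<otimes>\<^bsub>\<Gamma>\<^esub> b u),
     one = (\<lambda>_. \<one>\<^bsub>\<Gamma>\<^esub>)\<rparr>"

definition pi_act :: "('g, 'z) monoid_scheme \<Rightarrow> ('g \<Rightarrow> 'g \<Rightarrow> 'g)
     \<Rightarrow> ((nat \<Rightarrow> bool) \<Rightarrow> (nat \<Rightarrow> bool)) \<Rightarrow> (bool list \<Rightarrow> 'g) \<Rightarrow> (bool list \<Rightarrow> 'g)" where
  "pi_act \<Gamma> \<omega> v a = (THE b. b \<in> carrier (K_grp \<Gamma> \<omega>) \<and>
      (\<exists>ts ss \<sigma>. V_rep v ts ss \<sigma> \<and>
         (\<forall>i<length ts. \<forall>u. b (ss ! \<sigma> i @ u) = a (ts ! i @ u))))"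

definition G_omega :: "('g, 'z) monoid_scheme \<Rightarrow> ('g \<Rightarrow> 'g \<Rightarrow> 'g)
     \<Rightarrow> ((bool list \<Rightarrow> 'g) \<times> ((nat \<Rightarrow> bool) \<Rightarrow> (nat \<Rightarrow> bool))) monoid" where
  "G_omega \<Gamma> \<omega> = semidirect (K_grp \<Gamma> \<omega>) (pi_act \<Gamma> \<omega>) V_grp"

definition apow :: "('g, 'z) monoid_scheme \<Rightarrow> ('g \<Rightarrow> 'g) \<Rightarrow> int \<Rightarrow> 'g \<Rightarrow> 'g" where
  "apow \<Gamma> \<alpha> k g = (if k \<ge> 0 then (\<alpha> ^^ nat k) g
                     else (inv_into (carrier \<Gamma>) \<alpha> ^^ nat (- k)) g)"

definition ProdQ2 :: "('g, 'z) monoid_scheme \<Rightarrow> ((nat \<Rightarrow> bool) \<Rightarrow> 'g) monoid" where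
  "ProdQ2 \<Gamma> = \<lparr>carrier = PiE Q2 (\<lambda>_. carrier \<Gamma>),
     mult = (\<lambda>a b. restrict (\<lambda>x. a x \<otimes>\<^bsub>\<Gamma>\<^esub> b x) Q2),
     one = restrict (\<lambda>_. \<one>\<^bsub>\<Gamma>\<^esub>) Q2\<rparr>"

definition rho_act :: "('g, 'z) monoid_scheme \<Rightarrow> ('g \<Rightarrow> 'g)
     \<Rightarrow> ((nat \<Rightarrow> bool) \<Rightarrow> (nat \<Rightarrow> bool)) \<Rightarrow> ((nat \<Rightarrow> bool) \<Rightarrow> 'g) \<Rightarrow> ((nat \<Rightarrow> bool) \<Rightarrow> 'g)" where
  "rho_act \<Gamma> \<alpha> v a = restrict (\<lambda>x. apow \<Gamma> \<alpha> (- logder v (inv_into UNIV v x)) (a (inv_into UNIV v x))) Q2"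

definition Wreath :: "('g, 'z) monoid_scheme \<Rightarrow> ('g \<Rightarrow> 'g)
     \<Rightarrow> (((nat \<Rightarrow> bool) \<Rightarrow> 'g) \<times> ((nat \<Rightarrow> bool) \<Rightarrow> (nat \<Rightarrow> bool))) monoid" where
  "Wreath \<Gamma> \<alpha> = semidirect (ProdQ2 \<Gamma>) (rho_act \<Gamma> \<alpha>) V_grp"

end

theory Submission
  imports Defs
begin

definition zeros :: "nat \<Rightarrow> bool" where "zeros = (\<lambda>_. False)"
definition pre :: "nat \<Rightarrow> (nat \<Rightarrow> bool) \<Rightarrow> bool list" where "pre n x = map x [0..<n]"
definition zl :: "(nat \<Rightarrow> bool) \<Rightarrow> nat" where "zl x = (SOME n. \<forall>m\<ge>n. \<not> x m)"

lemma cat_cat: "cat s (cat r w) = cat (s @ r) w"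
  unfolding cat_def by (auto simp: nth_append)

lemma pre_cat: "pre (length t + N) (cat t w) = t @ pre N w"
  unfolding pre_def cat_def
  by (rule nth_equalityI) (auto simp: nth_append)

lemma pre_cat_zeros: "pre (length u) (cat u w) = u"
  using pre_cat[of u 0 w] by (simp add: pre_def)

lemma cat_pre_zeros: assumes "\<forall>m\<ge>n. \<not> x m" shows "cat (pre n x) zeros = x"
  using assms unfolding cat_def pre_def zeros_def by (auto simp: fun_eq_iff)

lemma cat_len_eq: assumes "\<forall>w. cat p w = cat q w" shows "length p = length q"
proof (rule ccontr)
  assume ne: "length p \<noteq> length q"
  { fix p q :: "bool list" assume h: "\<forall>w. cat p w = cat q w" "length p < length q"
    have "cat p (\<lambda>_. \<not> q ! length p) (length p) = cat q (\<lambda>_. \<not> q ! length p) (length p)"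
      using h by simp
    hence False using h(2) unfolding cat_def by simp }
  then show False using ne assms by (metis linorder_neqE_nat)
qed

lemma prefix_decomp: assumes "is_prefix s x" shows "x = cat s (\<lambda>k. x (k + length s))"
  using assms unfolding is_prefix_def cat_def by (auto simp: fun_eq_iff)

lemma is_prefix_cat: "is_prefix t (cat t w)"
  unfolding is_prefix_def cat_def by auto

lemma prefix_prefix: assumes "is_prefix t y" "is_prefix t' y" "length t' \<le> length t"
  shows "t = t' @ drop (length t') t"
proof -
  have "take (length t') t = t'"
    using assms unfolding is_prefix_def by (intro nth_equalityI) auto
  thus ?thesis by (metis append_take_drop_id)
qed

lemma logder_eq:
  assumes h: "\<forall>w. v (cat t w) = cat s w"
  shows "logder v (cat t w) = int (length t) - int (length s)"
  unfolding logder_def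
proof (rule the_equality)
  show "\<exists>t' s'. is_prefix t' (cat t w) \<and> (\<forall>w. v (cat t' w) = cat s' w)
      \<and> int (length t) - int (length s) = int (length t') - int (length s')"
    using h is_prefix_cat by blast
next
  fix d assume "\<exists>t' s'. is_prefix t' (cat t w) \<and> (\<forall>w. v (cat t' w) = cat s' w)
      \<and> d = int (length t') - int (length s')"
  then obtain t' s' where t': "is_prefix t' (cat t w)" "\<forall>w. v (cat t' w) = cat s' w"
      "d = int (length t') - int (length s')" by blast
  have gen: "int (length t1) - int (length s1) = int (length t2) - int (length s2)"
    if "t1 = t2 @ r" "\<forall>w. v (cat t1 w) = cat s1 w" "\<forall>w. v (cat t2 w) = cat s2 w"
    for t1 t2 r s1 s2
  proof -
    have "\<forall>w. cat (s2 @ r) w = cat s1 w"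
      using that by (metis cat_cat)
    hence "length (s2 @ r) = length s1" by (rule cat_len_eq)
    thus ?thesis using that(1) by simp
  qed
  show "d = int (length t) - int (length s)"
  proof (cases "length t' \<le> length t")
    case True
    then have "t = t' @ drop (length t') t" using prefix_prefix[OF is_prefix_cat t'(1)] by blast
    from gen[OF this h t'(2)] show ?thesis using t'(3) by simp
  next
    case False
    then have "t' = t @ drop (length t) t'" using prefix_prefix[OF t'(1) is_prefix_cat] by simp
    from gen[OF this t'(2) h] show ?thesis using t'(3) by simp
  qed
qed


lemma cat_zero: "\<forall>m\<ge>N. \<not> w m \<Longrightarrow> \<forall>m\<ge>length t + N. \<not> cat t w m"
  unfolding cat_def by auto

lemma cat_Q2: "\<forall>m\<ge>N. \<not> w m \<Longrightarrow> cat t w \<in> Q2"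
  using cat_zero[of N w t] unfolding Q2_def by blast

lemma rep_cover: assumes "V_rep v ts ss \<sigma>" shows "\<exists>i<length ts. is_prefix (ss ! \<sigma> i) x"
proof -
  have c: "complete_prefix_code (set ss)" and l: "length ts = length ss"
    and b: "bij_betw \<sigma> {..<length ts} {..<length ts}"
    using assms unfolding V_rep_def by auto
  obtain s where s: "s \<in> set ss" "is_prefix s x" using c unfolding complete_prefix_code_def by blast
  obtain j where j: "j < length ss" "s = ss ! j" using s(1) by (metis in_set_conv_nth)
  have "j \<in> \<sigma> ` {..<length ts}" using b j l by (simp add: bij_betw_def)
  then obtain i where "i < length ts" "\<sigma> i = j" by auto
  thus ?thesis using s j by blast
qed

lemma rep_decomp: assumes "V_rep v ts ss \<sigma>" "x \<in> Q2"
  shows "\<exists>i<length ts. \<exists>w N. x = cat (ss ! \<sigma> i) w \<and> (\<forall>m\<ge>N. \<not> w m)"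
proof -
  obtain i where i: "i < length ts" "is_prefix (ss ! \<sigma> i) x" using rep_cover[OF assms(1)] by blast
  obtain N where N: "\<forall>m\<ge>N. \<not> x m" using assms(2) Q2_def by auto
  have "\<forall>m\<ge>N. \<not> x (m + length (ss ! \<sigma> i))" using N by auto
  thus ?thesis using i prefix_decomp[OF i(2)] by blast
qed

lemma rep_eq: "V_rep v ts ss \<sigma> \<Longrightarrow> i < length ts \<Longrightarrow> \<forall>w. v (cat (ts ! i) w) = cat (ss ! \<sigma> i) w"
  unfolding V_rep_def by blast

locale autgrp = group \<Gamma> for \<Gamma> :: "('g, 'z) monoid_scheme" (structure) +
  fixes \<alpha> :: "'g \<Rightarrow> 'g"
  assumes alpha_iso: "\<alpha> \<in> iso \<Gamma> \<Gamma>"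
begin

abbreviation "\<beta> \<equiv> inv_into (carrier \<Gamma>) \<alpha>"

lemma alpha_bij: "bij_betw \<alpha> (carrier \<Gamma>) (carrier \<Gamma>)"
  using alpha_iso by (simp add: iso_def)

lemma alpha_hom: "g \<in> carrier \<Gamma> \<Longrightarrow> h \<in> carrier \<Gamma> \<Longrightarrow> \<alpha> (g \<otimes> h) = \<alpha> g \<otimes> \<alpha> h"
  using alpha_iso by (simp add: iso_def hom_def)

lemma alpha_carr: "g \<in> carrier \<Gamma> \<Longrightarrow> \<alpha> g \<in> carrier \<Gamma>"
  using alpha_bij bij_betwE by blast

lemma beta_carr: "g \<in> carrier \<Gamma> \<Longrightarrow> \<beta> g \<in> carrier \<Gamma>"
  using alpha_bij by (metis bij_betw_def inv_into_into)

lemma alpha_beta: "g \<in> carrier \<Gamma> \<Longrightarrow> \<alpha> (\<beta> g) = g"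
  using alpha_bij by (metis bij_betw_def f_inv_into_f)

lemma beta_alpha: "g \<in> carrier \<Gamma> \<Longrightarrow> \<beta> (\<alpha> g) = g"
  using alpha_bij by (metis bij_betw_def inv_into_f_f)

lemma alphan_carr: "g \<in> carrier \<Gamma> \<Longrightarrow> (\<alpha> ^^ n) g \<in> carrier \<Gamma>"
  by (induction n) (auto simp: alpha_carr)

lemma betan_carr: "g \<in> carrier \<Gamma> \<Longrightarrow> (\<beta> ^^ n) g \<in> carrier \<Gamma>"
  by (induction n) (auto simp: beta_carr)

lemma beta_alphan: "g \<in> carrier \<Gamma> \<Longrightarrow> (\<beta> ^^ n) ((\<alpha> ^^ n) g) = g"
proof (induction n arbitrary: g)
  case (Suc n)
  have "(\<beta> ^^ Suc n) ((\<alpha> ^^ Suc n) g) = (\<beta> ^^ n) (\<beta> (\<alpha> ((\<alpha> ^^ n) g)))"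
    using funpow_swap1[of \<beta> n] by simp
  also have "\<dots> = g" using Suc by (simp add: beta_alpha alphan_carr)
  finally show ?case .
qed simp

lemma alpha_betan: "g \<in> carrier \<Gamma> \<Longrightarrow> (\<alpha> ^^ n) ((\<beta> ^^ n) g) = g"
proof (induction n arbitrary: g)
  case (Suc n)
  have "(\<alpha> ^^ Suc n) ((\<beta> ^^ Suc n) g) = (\<alpha> ^^ n) (\<alpha> (\<beta> ((\<beta> ^^ n) g)))"
    using funpow_swap1[of \<alpha> n] by simp
  also have "\<dots> = g" using Suc by (simp add: alpha_beta betan_carr)
  finally show ?case .
qed simp

lemma alphan_hom: "g \<in> carrier \<Gamma> \<Longrightarrow> h \<in> carrier \<Gamma> \<Longrightarrow> (\<alpha> ^^ n) (g \<otimes> h) = (\<alpha> ^^ n) g \<otimes> (\<alpha> ^^ n) h"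
  by (induction n) (auto simp: alpha_hom alphan_carr)

lemma alphan_inj: "g \<in> carrier \<Gamma> \<Longrightarrow> h \<in> carrier \<Gamma> \<Longrightarrow> (\<alpha> ^^ n) g = (\<alpha> ^^ n) h \<Longrightarrow> g = h"
  by (metis beta_alphan)

lemma apow_alphan: assumes "g \<in> carrier \<Gamma>" "int m + k \<ge> 0"
  shows "apow \<Gamma> \<alpha> k ((\<alpha> ^^ m) g) = (\<alpha> ^^ nat (int m + k)) g"
proof (cases "k \<ge> 0")
  case True
  have "(\<alpha> ^^ nat k) ((\<alpha> ^^ m) g) = (\<alpha> ^^ (nat k + m)) g"
    by (simp add: funpow_add)
  then show ?thesis using True unfolding apow_def
    by (simp add: nat_add_distrib add.commute)
next
  case False
  define j where "j = nat (- k)"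
  have m: "m = j + nat (int m + k)" using False assms(2) unfolding j_def by simp
  have "(\<alpha> ^^ m) g = (\<alpha> ^^ j) ((\<alpha> ^^ nat (int m + k)) g)"
    by (subst m) (simp add: funpow_add)
  then show ?thesis using False unfolding apow_def j_def[symmetric]
    by (simp add: beta_alphan alphan_carr assms(1))
qed

definition Phi :: "(bool list \<Rightarrow> 'g) \<Rightarrow> (nat \<Rightarrow> bool) \<Rightarrow> 'g" where
  "Phi a = restrict (\<lambda>x. (\<alpha> ^^ zl x) (a (pre (zl x) x))) Q2"

definition Psi :: "((nat \<Rightarrow> bool) \<Rightarrow> 'g) \<Rightarrow> bool list \<Rightarrow> 'g" where
  "Psi f = (\<lambda>u. (\<beta> ^^ length u) (f (cat u zeros)))"

abbreviation "K \<equiv> K_grp \<Gamma> (\<lambda>g h. \<alpha> g)"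

lemma KI: assumes "\<And>u. a u \<in> carrier \<Gamma>" "\<And>u. \<alpha> (a (u @ [False])) = a u"
  shows "a \<in> carrier K"
  unfolding K_grp_def partial_object.simps mem_Collect_eq
  using assms by (intro conjI allI) (simp_all only: assms)

lemma K_mult: "a \<otimes>\<^bsub>K\<^esub> b = (\<lambda>u. a u \<otimes> b u)"
  by (simp add: K_grp_def)

lemma zl: assumes "x \<in> Q2" shows "\<forall>m\<ge>zl x. \<not> x m"
proof -
  obtain n where "\<forall>m\<ge>n. \<not> x m" using assms Q2_def by auto
  then show ?thesis unfolding zl_def by (rule someI)
qed

lemma KD: assumes "a \<in> carrier K"
  shows "(\<forall>u. a u \<in> carrier \<Gamma>) \<and> (\<forall>u. a u = \<alpha> (a (u @ [False])))"
  using assms unfolding K_grp_def partial_object.simps mem_Collect_eq by assumption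

lemma KD1: "a \<in> carrier K \<Longrightarrow> a u \<in> carrier \<Gamma>"
  using KD by blast

lemma KD2: "a \<in> carrier K \<Longrightarrow> \<alpha> (a (u @ [False])) = a u"
  using KD by metis


lemma Phi_any_aux: assumes "a \<in> carrier K" "\<forall>m\<ge>n. \<not> x m"
  shows "(\<alpha> ^^ (n + d)) (a (pre (n + d) x)) = (\<alpha> ^^ n) (a (pre n x))"
proof (induction d)
  case (Suc d)
  have "pre (n + Suc d) x = pre (n + d) x @ [False]" using assms(2) by (simp add: pre_def)
  hence "(\<alpha> ^^ (n + Suc d)) (a (pre (n + Suc d) x)) = (\<alpha> ^^ (n + d)) (\<alpha> (a (pre (n + d) x @ [False])))"
    by (simp add: funpow_Suc_right del: funpow.simps)
  also have "\<dots> = (\<alpha> ^^ (n + d)) (a (pre (n + d) x))" using KD2[OF assms(1)] by simp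
  finally show ?case using Suc by simp
qed simp

lemma Phi_any: assumes "a \<in> carrier K" "\<forall>m\<ge>n. \<not> x m"
  shows "Phi a x = (\<alpha> ^^ n) (a (pre n x))"
proof -
  have x: "x \<in> Q2" using assms(2) Q2_def by auto
  have z: "\<forall>m\<ge>zl x. \<not> x m" using zl[OF x] .
  show ?thesis
  proof (cases "n \<le> zl x")
    case True
    then show ?thesis using Phi_any_aux[OF assms(1) assms(2), of "zl x - n"] x
      by (simp add: Phi_def)
  next
    case False
    then show ?thesis using Phi_any_aux[OF assms(1) z, of "n - zl x"] x
      by (simp add: Phi_def)
  qed
qed

lemma Phi_carr: "a \<in> carrier K \<Longrightarrow> Phi a \<in> carrier (ProdQ2 \<Gamma>)"
  by (auto simp: Phi_def ProdQ2_def KD1 alphan_carr)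

lemma Phi_mult: "a \<in> carrier K \<Longrightarrow> b \<in> carrier K \<Longrightarrow>
   Phi (a \<otimes>\<^bsub>K\<^esub> b) = Phi a \<otimes>\<^bsub>ProdQ2 \<Gamma>\<^esub> Phi b"
  by (auto simp: Phi_def ProdQ2_def K_mult alphan_hom fun_eq_iff KD1)

lemma Psi_Phi: "a \<in> carrier K \<Longrightarrow> Psi (Phi a) = a"
proof
  fix u assume a: "a \<in> carrier K"
  have "\<forall>m\<ge>length u. \<not> cat u zeros m" by (simp add: cat_def zeros_def)
  hence "Phi a (cat u zeros) = (\<alpha> ^^ length u) (a u)"
    using Phi_any[OF a] pre_cat_zeros by metis
  thus "Psi (Phi a) u = a u" using a by (simp add: Psi_def beta_alphan KD1)
qed

lemma Psi_carr: assumes "f \<in> carrier (ProdQ2 \<Gamma>)" shows "Psi f \<in> carrier K"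
proof -
  have q: "cat u zeros \<in> Q2" for u
    unfolding Q2_def cat_def zeros_def by (auto intro!: exI[of _ "length u"])
  have fc: "f (cat u zeros) \<in> carrier \<Gamma>" for u using assms q by (auto simp: ProdQ2_def)
  have "cat (u @ [False]) zeros = cat u zeros" for u
    by (simp add: cat_cat[symmetric]) (auto simp: cat_def zeros_def fun_eq_iff)
  then show ?thesis unfolding Psi_def
    using fc by (intro KI) (auto simp: betan_carr alpha_beta)
qed

lemma Phi_Psi: assumes "f \<in> carrier (ProdQ2 \<Gamma>)" shows "Phi (Psi f) = f"
proof
  fix x show "Phi (Psi f) x = f x"
  proof (cases "x \<in> Q2")
    case True
    have z: "\<forall>m\<ge>zl x. \<not> x m" using zl[OF True] .
    have "Phi (Psi f) x = (\<alpha> ^^ zl x) (Psi f (pre (zl x) x))"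
      using Phi_any[OF Psi_carr[OF assms] z] .
    also have "\<dots> = f x" unfolding Psi_def using cat_pre_zeros[OF z] True assms
      by (simp add: pre_def ProdQ2_def alpha_betan PiE_iff)
    finally show ?thesis .
  next
    case False
    then show ?thesis using assms by (simp add: Phi_def ProdQ2_def PiE_iff extensional_def)
  qed
qed


lemma rho_core:
  assumes v: "bij v" and h: "\<forall>w. v (cat t w) = cat s w" and N: "\<forall>m\<ge>N. \<not> w m"
    and a: "a \<in> carrier K"
  shows "rho_act \<Gamma> \<alpha> v (Phi a) (cat s w) = (\<alpha> ^^ (length s + N)) (a (t @ pre N w))"
proof -
  have x: "cat s w \<in> Q2" using cat_Q2[OF N] .
  have iv: "inv_into UNIV v (cat s w) = cat t w"
    using h v by (metis bij_is_inj inv_into_f_f UNIV_I)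
  have ld: "logder v (cat t w) = int (length t) - int (length s)" using logder_eq[OF h] .
  have ph: "Phi a (cat t w) = (\<alpha> ^^ (length t + N)) (a (t @ pre N w))"
    using Phi_any[OF a cat_zero[OF N, of t]] pre_cat by simp
  have "apow \<Gamma> \<alpha> (- (int (length t) - int (length s))) ((\<alpha> ^^ (length t + N)) (a (t @ pre N w)))
      = (\<alpha> ^^ nat (int (length t + N) + - (int (length t) - int (length s)))) (a (t @ pre N w))"
    by (rule apow_alphan) (auto simp: KD1[OF a])
  also have "nat (int (length t + N) + - (int (length t) - int (length s))) = length s + N" by simp
  finally show ?thesis using x iv ld ph unfolding rho_act_def by simp
qed

lemma Phi_pi_rep:
  assumes v: "bij v" and r: "V_rep v ts ss \<sigma>" and a: "a \<in> carrier K" and c: "c \<in> carrier K"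
    and h: "\<forall>i<length ts. \<forall>u. c (ss ! \<sigma> i @ u) = a (ts ! i @ u)"
  shows "Phi c = rho_act \<Gamma> \<alpha> v (Phi a)"
proof
  fix x show "Phi c x = rho_act \<Gamma> \<alpha> v (Phi a) x"
  proof (cases "x \<in> Q2")
    case True
    obtain i w N where i: "i < length ts" "x = cat (ss ! \<sigma> i) w" "\<forall>m\<ge>N. \<not> w m"
      using rep_decomp[OF r True] by blast
    have "Phi c x = (\<alpha> ^^ (length (ss ! \<sigma> i) + N)) (c (ss ! \<sigma> i @ pre N w))"
      using Phi_any[OF c cat_zero[OF i(3), of "ss ! \<sigma> i"]] pre_cat i(2) by simp
    also have "\<dots> = (\<alpha> ^^ (length (ss ! \<sigma> i) + N)) (a (ts ! i @ pre N w))" using h i(1) by simp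
    also have "\<dots> = rho_act \<Gamma> \<alpha> v (Phi a) x"
      using rho_core[OF v rep_eq[OF r i(1)] i(3) a] i(2) by simp
    finally show ?thesis .
  next
    case False
    then show ?thesis by (simp add: Phi_def rho_act_def)
  qed
qed

lemma rho_carr: assumes v: "v \<in> ThompsonV" and a: "a \<in> carrier K"
  shows "rho_act \<Gamma> \<alpha> v (Phi a) \<in> carrier (ProdQ2 \<Gamma>)"
proof -
  obtain ts ss \<sigma> where r: "V_rep v ts ss \<sigma>" and b: "bij v" using v unfolding ThompsonV_def by blast
  have "rho_act \<Gamma> \<alpha> v (Phi a) x \<in> carrier \<Gamma>" if x: "x \<in> Q2" for x
  proof -
    obtain i w N where i: "i < length ts" "x = cat (ss ! \<sigma> i) w" "\<forall>m\<ge>N. \<not> w m"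
      using rep_decomp[OF r x] by blast
    show ?thesis using rho_core[OF b rep_eq[OF r i(1)] i(3) a] i(2) by (simp add: alphan_carr KD1[OF a])
  qed
  thus ?thesis unfolding ProdQ2_def by (simp add: rho_act_def)
qed

lemma pi_eq: assumes v: "v \<in> ThompsonV" and a: "a \<in> carrier K"
  shows "pi_act \<Gamma> (\<lambda>g h. \<alpha> g) v a = Psi (rho_act \<Gamma> \<alpha> v (Phi a))"
  unfolding pi_act_def
proof (rule the_equality)
  obtain ts ss \<sigma> where r: "V_rep v ts ss \<sigma>" and b: "bij v" using v unfolding ThompsonV_def by blast
  let ?b = "Psi (rho_act \<Gamma> \<alpha> v (Phi a))"
  have "?b (ss ! \<sigma> i @ u) = a (ts ! i @ u)" if i: "i < length ts" for i u
  proof -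
    have z: "\<forall>m\<ge>length u. \<not> cat u zeros m" by (simp add: cat_def zeros_def)
    have "?b (ss ! \<sigma> i @ u) = (\<beta> ^^ (length (ss ! \<sigma> i) + length u))
        (rho_act \<Gamma> \<alpha> v (Phi a) (cat (ss ! \<sigma> i) (cat u zeros)))"
      by (simp add: Psi_def cat_cat)
    also have "\<dots> = a (ts ! i @ u)"
      using rho_core[OF b rep_eq[OF r i] z a] pre_cat_zeros
      by (simp add: beta_alphan KD1[OF a])
    finally show ?thesis .
  qed
  then show "?b \<in> carrier K \<and> (\<exists>ts ss \<sigma>. V_rep v ts ss \<sigma> \<and>
      (\<forall>i<length ts. \<forall>u. ?b (ss ! \<sigma> i @ u) = a (ts ! i @ u)))"
    using r Psi_carr[OF rho_carr[OF v a]] by blast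
next
  fix c assume "c \<in> carrier K \<and> (\<exists>ts ss \<sigma>. V_rep v ts ss \<sigma> \<and>
      (\<forall>i<length ts. \<forall>u. c (ss ! \<sigma> i @ u) = a (ts ! i @ u)))"
  then obtain ts ss \<sigma> where c: "c \<in> carrier K" and r: "V_rep v ts ss \<sigma>"
    and h: "\<forall>i<length ts. \<forall>u. c (ss ! \<sigma> i @ u) = a (ts ! i @ u)" by blast
  have b: "bij v" using v unfolding ThompsonV_def by blast
  have "Phi c = rho_act \<Gamma> \<alpha> v (Phi a)" using Phi_pi_rep[OF b r a c h] .
  thus "c = Psi (rho_act \<Gamma> \<alpha> v (Phi a))" using Psi_Phi[OF c] by simp
qed

lemma pi_carr: "v \<in> ThompsonV \<Longrightarrow> a \<in> carrier K \<Longrightarrow> pi_act \<Gamma> (\<lambda>g h. \<alpha> g) v a \<in> carrier K"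
  using pi_eq Psi_carr rho_carr by simp

lemma Phi_pi: "v \<in> ThompsonV \<Longrightarrow> a \<in> carrier K \<Longrightarrow> Phi (pi_act \<Gamma> (\<lambda>g h. \<alpha> g) v a) = rho_act \<Gamma> \<alpha> v (Phi a)"
  using pi_eq Phi_Psi rho_carr by simp

lemma main_iso: "(\<lambda>(a, v). (Phi a, v)) \<in> iso (G_omega \<Gamma> (\<lambda>g h. \<alpha> g)) (Wreath \<Gamma> \<alpha>)"
proof -
  have cG: "carrier (G_omega \<Gamma> (\<lambda>g h. \<alpha> g)) = carrier K \<times> ThompsonV"
    by (simp add: G_omega_def semidirect_def V_grp_def)
  have cW: "carrier (Wreath \<Gamma> \<alpha>) = carrier (ProdQ2 \<Gamma>) \<times> ThompsonV"
    by (simp add: Wreath_def semidirect_def V_grp_def)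
  have mG: "(a, v) \<otimes>\<^bsub>G_omega \<Gamma> (\<lambda>g h. \<alpha> g)\<^esub> (b, w) = (a \<otimes>\<^bsub>K\<^esub> pi_act \<Gamma> (\<lambda>g h. \<alpha> g) v b, v \<circ> w)"
    for a b v w by (simp add: G_omega_def semidirect_def V_grp_def)
  have mW: "(a, v) \<otimes>\<^bsub>Wreath \<Gamma> \<alpha>\<^esub> (b, w) = (a \<otimes>\<^bsub>ProdQ2 \<Gamma>\<^esub> rho_act \<Gamma> \<alpha> v b, v \<circ> w)"
    for a b v w by (simp add: Wreath_def semidirect_def V_grp_def)
  have hom: "(\<lambda>(a, v). (Phi a, v)) \<in> hom (G_omega \<Gamma> (\<lambda>g h. \<alpha> g)) (Wreath \<Gamma> \<alpha>)"
  proof (rule homI)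
    fix p assume "p \<in> carrier (G_omega \<Gamma> (\<lambda>g h. \<alpha> g))"
    then obtain a v where "p = (a, v)" "a \<in> carrier K" "v \<in> ThompsonV" using cG by blast
    then show "(\<lambda>(a, v). (Phi a, v)) p \<in> carrier (Wreath \<Gamma> \<alpha>)" using cW Phi_carr by simp
  next
    fix p q assume p: "p \<in> carrier (G_omega \<Gamma> (\<lambda>g h. \<alpha> g))" and q: "q \<in> carrier (G_omega \<Gamma> (\<lambda>g h. \<alpha> g))"
    obtain a v where pa: "p = (a, v)" "a \<in> carrier K" "v \<in> ThompsonV" using p cG by blast
    obtain b w where qb: "q = (b, w)" "b \<in> carrier K" "w \<in> ThompsonV" using q cG by blast
    have "Phi (a \<otimes>\<^bsub>K\<^esub> pi_act \<Gamma> (\<lambda>g h. \<alpha> g) v b) = Phi a \<otimes>\<^bsub>ProdQ2 \<Gamma>\<^esub> rho_act \<Gamma> \<alpha> v (Phi b)"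
      using Phi_mult[OF pa(2) pi_carr[OF pa(3) qb(2)]] Phi_pi[OF pa(3) qb(2)] by simp
    then show "(\<lambda>(a, v). (Phi a, v)) (p \<otimes>\<^bsub>G_omega \<Gamma> (\<lambda>g h. \<alpha> g)\<^esub> q) =
       (\<lambda>(a, v). (Phi a, v)) p \<otimes>\<^bsub>Wreath \<Gamma> \<alpha>\<^esub> (\<lambda>(a, v). (Phi a, v)) q"
      unfolding pa(1) qb(1) mG by (simp add: mW)
  qed
  have inj: "inj_on (\<lambda>(a, v). (Phi a, v)) (carrier K \<times> ThompsonV)"
  proof (rule inj_onI)
    fix p q assume p: "p \<in> carrier K \<times> ThompsonV" and q: "q \<in> carrier K \<times> ThompsonV"
      and e: "(\<lambda>(a, v). (Phi a, v)) p = (\<lambda>(a, v). (Phi a, v)) q"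
    obtain a v where pa: "p = (a, v)" "a \<in> carrier K" using p by blast
    obtain b w where qb: "q = (b, w)" "b \<in> carrier K" using q by blast
    have "Phi a = Phi b" "v = w" using e pa qb by simp_all
    then have "a = b" using Psi_Phi[OF pa(2)] Psi_Phi[OF qb(2)] by metis
    then show "p = q" using pa qb \<open>v = w\<close> by simp
  qed
  have surj: "(\<lambda>(a, v). (Phi a, v)) ` (carrier K \<times> ThompsonV) = carrier (ProdQ2 \<Gamma>) \<times> ThompsonV"
  proof
    show "(\<lambda>(a, v). (Phi a, v)) ` (carrier K \<times> ThompsonV) \<subseteq> carrier (ProdQ2 \<Gamma>) \<times> ThompsonV"
      by (auto simp: Phi_carr)
    show "carrier (ProdQ2 \<Gamma>) \<times> ThompsonV \<subseteq> (\<lambda>(a, v). (Phi a, v)) ` (carrier K \<times> ThompsonV)"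
    proof
      fix p assume p: "p \<in> carrier (ProdQ2 \<Gamma>) \<times> ThompsonV"
      then obtain f v where "p = (f, v)" "f \<in> carrier (ProdQ2 \<Gamma>)" "v \<in> ThompsonV" by auto
      then show "p \<in> (\<lambda>(a, v). (Phi a, v)) ` (carrier K \<times> ThompsonV)"
      proof -
        have "(Psi f, v) \<in> carrier K \<times> ThompsonV" using Psi_carr[OF \<open>f \<in> carrier (ProdQ2 \<Gamma>)\<close>] \<open>v \<in> ThompsonV\<close> by blast
        moreover have "p = (\<lambda>(a, v). (Phi a, v)) (Psi f, v)"
          using Phi_Psi[OF \<open>f \<in> carrier (ProdQ2 \<Gamma>)\<close>] \<open>p = (f, v)\<close> by simp
        ultimately show ?thesis by (rule rev_image_eqI)
      qed
    qed
  qed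
  show ?thesis using hom inj surj unfolding iso_def bij_betw_def cG cW by simp
qed

end

theorem mainTheorem8:
  fixes \<Gamma> :: "('g, 'z) monoid_scheme" and \<alpha> :: "'g \<Rightarrow> 'g"
  assumes "group \<Gamma>" and "\<alpha> \<in> iso \<Gamma> \<Gamma>"
  shows "G_omega \<Gamma> (\<lambda>g h. \<alpha> g) \<cong> Wreath \<Gamma> \<alpha>"
proof -
  interpret autgrp \<Gamma> \<alpha> using assms by (simp add: autgrp_def autgrp_axioms_def)
  show ?thesis using main_iso by (rule is_isoI)
qed

end
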